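(* Let $(\mathcal{A},\mathcal{E})$ be a finite, essentially small exact category. Then $\mu_\mathcal{E}:(\mathrm{ind}\mathcal{A},\subset_\mathcal{E})\to(\mathfrak{S}(\mathbb{N}),\lll)$ is a Gabriel–Roiter measure, i.e.: (GR1) $\mu_\mathcal{E}$ is order-preserving; (GR2) $\mu_\mathcal{E}(X)=\mu_\mathcal{E}(Y)$ implies $l_\mathcal{E}(X)=l_\mathcal{E}(Y)$ for all $X,Y\in\mathrm{ind}\mathcal{A}$; (GR3) if $X,Y\in\mathrm{ind}\mathcal{A}$ satisfy $l_\mathcal{E}(X)\ge l_\mathcal{E}(Y)$ and $\mu_\mathcal{E}(X')\lll\mu_\mathcal{E}(Y)$ with $\mu_\mathcal{E}(X')\ne\mu_\mathcal{E}(Y)$ for every indecomposable $X'\subsetneq_\mathcal{E}X$, then $\mu_\mathcal{E}(X)\lll\mu_\mathcal{E}(Y)$.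
   Context: $(\mathcal{A},\mathcal{E})$ is a Quillen exact category; admissible monics are morphisms $i$ with $(i,d)\in\mathcal{E}$ for some $d$. $X\subset_\mathcal{E}Y$ means there is an admissible monic $X\to Y$; $X\subsetneq_\mathcal{E}Y$ means there is one that is not an isomorphism. The $\mathcal{E}$-length $l_\mathcal{E}(X)$ is the supremum of all $n$ such that there is a chain $0=X_0\to\cdots\to X_n=X$ of admissible monics none of which is an isomorphism; $(\mathcal{A},\mathcal{E})$ is finite if $l_\mathcal{E}(X)<\infty$ for all $X$. $\mathrm{ind}\mathcal{A}$ is the set of isomorphism classes of indecomposable objects, partially ordered by $\subset_\mathcal{E}$. $\mathfrak{S}(\mathbb{N})$ is the set of finite nonempty sequences of natural numbers, totally ordered by: $x\lll y$ iff $x=y$, or $x$ is a proper prefix of $y$, or at the first index $i$ where $x_i\neq y_i$ (both defined) one has $x_i>y_i$. For indecomposable $X$, $\mu_\mathcal{E}(X)$ is the $\lll$-maximum of $(l_\mathcal{E}(X_1),\dots,l_\mathcal{E}(X_n))$ over all chains $X_1\subsetneq_\mathcal{E}\cdots\subsetneq_\mathcal{E}X_n=X$ ($n\ge1$) with all $X_i$ indecomposable. *)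

theory Defs
  imports Main "HOL-Library.Extended_Nat" "HOL-Library.Sublist"
begin

record ('o, 'm) addcat =
  cObj  :: "'o set"
  cArr  :: "'m set"
  cDom  :: "'m \<Rightarrow> 'o"
  cCod  :: "'m \<Rightarrow> 'o"
  cComp :: "'m \<Rightarrow> 'm \<Rightarrow> 'm"   (* cComp C g f = g o f *)
  cId   :: "'o \<Rightarrow> 'm"
  cAdd  :: "'m \<Rightarrow> 'm \<Rightarrow> 'm"
  cZero :: "'o \<Rightarrow> 'o \<Rightarrow> 'm"
  cNeg  :: "'m \<Rightarrow> 'm"

definition hom :: "('o,'m) addcat \<Rightarrow> 'o \<Rightarrow> 'o \<Rightarrow> 'm set" where
  "hom C X Y = {f \<in> cArr C. cDom C f = X \<and> cCod C f = Y}"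

definition is_category :: "('o,'m) addcat \<Rightarrow> bool" where
  "is_category C \<longleftrightarrow>
     (\<forall>f\<in>cArr C. cDom C f \<in> cObj C \<and> cCod C f \<in> cObj C) \<and>
     (\<forall>X\<in>cObj C. cId C X \<in> hom C X X) \<and>
     (\<forall>f\<in>cArr C. \<forall>g\<in>cArr C. cCod C f = cDom C g \<longrightarrow>
         cComp C g f \<in> hom C (cDom C f) (cCod C g)) \<and>
     (\<forall>f\<in>cArr C. cComp C (cId C (cCod C f)) f = f \<and> cComp C f (cId C (cDom C f)) = f) \<and>
     (\<forall>f\<in>cArr C. \<forall>g\<in>cArr C. \<forall>h\<in>cArr C. cCod C f = cDom C g \<and> cCod C g = cDom C h \<longrightarrow>
         cComp C h (cComp C g f) = cComp C (cComp C h g) f)"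

definition is_preadditive :: "('o,'m) addcat \<Rightarrow> bool" where
  "is_preadditive C \<longleftrightarrow> is_category C \<and>
     (\<forall>X\<in>cObj C. \<forall>Y\<in>cObj C.
        cZero C X Y \<in> hom C X Y \<and>
        (\<forall>f\<in>hom C X Y. \<forall>g\<in>hom C X Y. cAdd C f g \<in> hom C X Y) \<and>
        (\<forall>f\<in>hom C X Y. cNeg C f \<in> hom C X Y) \<and>
        (\<forall>f\<in>hom C X Y. \<forall>g\<in>hom C X Y. \<forall>h\<in>hom C X Y.
            cAdd C (cAdd C f g) h = cAdd C f (cAdd C g h)) \<and>
        (\<forall>f\<in>hom C X Y. \<forall>g\<in>hom C X Y. cAdd C f g = cAdd C g f) \<and>
        (\<forall>f\<in>hom C X Y. cAdd C f (cZero C X Y) = f) \<and>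
        (\<forall>f\<in>hom C X Y. cAdd C f (cNeg C f) = cZero C X Y)) \<and>
     (\<forall>X\<in>cObj C. \<forall>Y\<in>cObj C. \<forall>Z\<in>cObj C.
        (\<forall>f\<in>hom C X Y. \<forall>f'\<in>hom C X Y. \<forall>g\<in>hom C Y Z.
            cComp C g (cAdd C f f') = cAdd C (cComp C g f) (cComp C g f')) \<and>
        (\<forall>f\<in>hom C X Y. \<forall>g\<in>hom C Y Z. \<forall>g'\<in>hom C Y Z.
            cComp C (cAdd C g g') f = cAdd C (cComp C g f) (cComp C g' f)))"

definition is_zero_obj :: "('o,'m) addcat \<Rightarrow> 'o \<Rightarrow> bool" where
  "is_zero_obj C Z \<longleftrightarrow> Z \<in> cObj C \<and>
     (\<forall>X\<in>cObj C. (\<exists>!f. f \<in> hom C Z X) \<and> (\<exists>!f. f \<in> hom C X Z))"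

definition is_biproduct ::
  "('o,'m) addcat \<Rightarrow> 'o \<Rightarrow> 'o \<Rightarrow> 'o \<Rightarrow> 'm \<Rightarrow> 'm \<Rightarrow> 'm \<Rightarrow> 'm \<Rightarrow> bool" where
  "is_biproduct C A B P i1 i2 p1 p2 \<longleftrightarrow>
     i1 \<in> hom C A P \<and> i2 \<in> hom C B P \<and> p1 \<in> hom C P A \<and> p2 \<in> hom C P B \<and>
     cComp C p1 i1 = cId C A \<and> cComp C p2 i2 = cId C B \<and>
     cComp C p2 i1 = cZero C A B \<and> cComp C p1 i2 = cZero C B A \<and>
     cAdd C (cComp C i1 p1) (cComp C i2 p2) = cId C P"

definition is_additive :: "('o,'m) addcat \<Rightarrow> bool" where
  "is_additive C \<longleftrightarrow> is_preadditive C \<and>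
     (\<exists>Z. is_zero_obj C Z) \<and>
     (\<forall>A\<in>cObj C. \<forall>B\<in>cObj C. \<exists>P\<in>cObj C. \<exists>i1 i2 p1 p2. is_biproduct C A B P i1 i2 p1 p2)"

definition is_iso :: "('o,'m) addcat \<Rightarrow> 'm \<Rightarrow> bool" where
  "is_iso C f \<longleftrightarrow> f \<in> cArr C \<and>
     (\<exists>g\<in>hom C (cCod C f) (cDom C f).
        cComp C g f = cId C (cDom C f) \<and> cComp C f g = cId C (cCod C f))"

definition is_kernel :: "('o,'m) addcat \<Rightarrow> 'm \<Rightarrow> 'm \<Rightarrow> bool" where
  "is_kernel C i d \<longleftrightarrow> i \<in> cArr C \<and> d \<in> cArr C \<and> cCod C i = cDom C d \<and>
     cComp C d i = cZero C (cDom C i) (cCod C d) \<and>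
     (\<forall>T\<in>cObj C. \<forall>f\<in>hom C T (cDom C d). cComp C d f = cZero C T (cCod C d) \<longrightarrow>
        (\<exists>!g. g \<in> hom C T (cDom C i) \<and> cComp C i g = f))"

definition is_cokernel :: "('o,'m) addcat \<Rightarrow> 'm \<Rightarrow> 'm \<Rightarrow> bool" where
  "is_cokernel C d i \<longleftrightarrow> i \<in> cArr C \<and> d \<in> cArr C \<and> cCod C i = cDom C d \<and>
     cComp C d i = cZero C (cDom C i) (cCod C d) \<and>
     (\<forall>T\<in>cObj C. \<forall>f\<in>hom C (cCod C i) T. cComp C f i = cZero C (cDom C i) T \<longrightarrow>
        (\<exists>!g. g \<in> hom C (cCod C d) T \<and> cComp C g d = f))"

definition is_kc_pair :: "('o,'m) addcat \<Rightarrow> 'm \<Rightarrow> 'm \<Rightarrow> bool" where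
  "is_kc_pair C i d \<longleftrightarrow> is_kernel C i d \<and> is_cokernel C d i"

definition iso_pairs :: "('o,'m) addcat \<Rightarrow> 'm \<Rightarrow> 'm \<Rightarrow> 'm \<Rightarrow> 'm \<Rightarrow> bool" where
  "iso_pairs C i d i' d' \<longleftrightarrow>
     (\<exists>a b c. a \<in> hom C (cDom C i) (cDom C i') \<and> b \<in> hom C (cCod C i) (cCod C i') \<and>
        c \<in> hom C (cCod C d) (cCod C d') \<and> is_iso C a \<and> is_iso C b \<and> is_iso C c \<and>
        cComp C i' a = cComp C b i \<and> cComp C d' b = cComp C c d)"

(* pushout of i : A -> B along f : A -> A', giving i' : A' -> P and f' : B -> P *)
definition is_pushout :: "('o,'m) addcat \<Rightarrow> 'm \<Rightarrow> 'm \<Rightarrow> 'm \<Rightarrow> 'm \<Rightarrow> bool" where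
  "is_pushout C i f i' f' \<longleftrightarrow>
     i \<in> cArr C \<and> f \<in> cArr C \<and> cDom C i = cDom C f \<and>
     i' \<in> hom C (cCod C f) (cCod C i') \<and> f' \<in> hom C (cCod C i) (cCod C i') \<and>
     cComp C i' f = cComp C f' i \<and>
     (\<forall>T\<in>cObj C. \<forall>u\<in>hom C (cCod C f) T. \<forall>v\<in>hom C (cCod C i) T.
        cComp C u f = cComp C v i \<longrightarrow>
        (\<exists>!w. w \<in> hom C (cCod C i') T \<and> cComp C w i' = u \<and> cComp C w f' = v))"

(* pullback of d : B -> C0 along f : C' -> C0, giving d' : Q -> C' and f' : Q -> B *)
definition is_pullback :: "('o,'m) addcat \<Rightarrow> 'm \<Rightarrow> 'm \<Rightarrow> 'm \<Rightarrow> 'm \<Rightarrow> bool" where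
  "is_pullback C d f d' f' \<longleftrightarrow>
     d \<in> cArr C \<and> f \<in> cArr C \<and> cCod C d = cCod C f \<and>
     d' \<in> hom C (cDom C d') (cDom C f) \<and> f' \<in> hom C (cDom C d') (cDom C d) \<and>
     cComp C f d' = cComp C d f' \<and>
     (\<forall>T\<in>cObj C. \<forall>u\<in>hom C T (cDom C f). \<forall>v\<in>hom C T (cDom C d).
        cComp C f u = cComp C d v \<longrightarrow>
        (\<exists>!w. w \<in> hom C T (cDom C d') \<and> cComp C d' w = u \<and> cComp C f' w = v))"

definition adm_mono :: "('o,'m) addcat \<Rightarrow> ('m \<times> 'm) set \<Rightarrow> 'm \<Rightarrow> bool" where
  "adm_mono C E i \<longleftrightarrow> (\<exists>d. (i, d) \<in> E)"

definition adm_epi :: "('o,'m) addcat \<Rightarrow> ('m \<times> 'm) set \<Rightarrow> 'm \<Rightarrow> bool" where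
  "adm_epi C E d \<longleftrightarrow> (\<exists>i. (i, d) \<in> E)"

definition exact_category :: "('o,'m) addcat \<Rightarrow> ('m \<times> 'm) set \<Rightarrow> bool" where
  "exact_category C E \<longleftrightarrow> is_additive C \<and>
     (\<forall>(i,d)\<in>E. is_kc_pair C i d) \<and>
     (\<forall>i d i' d'. (i,d) \<in> E \<and> is_kc_pair C i' d' \<and> iso_pairs C i d i' d' \<longrightarrow> (i',d') \<in> E) \<and>
     (\<forall>X\<in>cObj C. adm_mono C E (cId C X)) \<and>
     (\<forall>X\<in>cObj C. adm_epi C E (cId C X)) \<and>
     (\<forall>i j. adm_mono C E i \<and> adm_mono C E j \<and> cCod C i = cDom C j \<longrightarrow> adm_mono C E (cComp C j i)) \<and>
     (\<forall>d e. adm_epi C E d \<and> adm_epi C E e \<and> cCod C d = cDom C e \<longrightarrow> adm_epi C E (cComp C e d)) \<and>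
     (\<forall>i f. adm_mono C E i \<and> f \<in> cArr C \<and> cDom C f = cDom C i \<longrightarrow>
        (\<exists>i' f'. is_pushout C i f i' f' \<and> adm_mono C E i')) \<and>
     (\<forall>d f. adm_epi C E d \<and> f \<in> cArr C \<and> cCod C f = cCod C d \<longrightarrow>
        (\<exists>d' f'. is_pullback C d f d' f' \<and> adm_epi C E d'))"

definition esub :: "('o,'m) addcat \<Rightarrow> ('m \<times> 'm) set \<Rightarrow> 'o \<Rightarrow> 'o \<Rightarrow> bool" where
  "esub C E X Y \<longleftrightarrow> (\<exists>i\<in>hom C X Y. adm_mono C E i)"

definition epsub :: "('o,'m) addcat \<Rightarrow> ('m \<times> 'm) set \<Rightarrow> 'o \<Rightarrow> 'o \<Rightarrow> bool" where
  "epsub C E X Y \<longleftrightarrow> (\<exists>i\<in>hom C X Y. adm_mono C E i \<and> \<not> is_iso C i)"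

definition chain_lengths :: "('o,'m) addcat \<Rightarrow> ('m \<times> 'm) set \<Rightarrow> 'o \<Rightarrow> nat set" where
  "chain_lengths C E X = {n. \<exists>Xs :: nat \<Rightarrow> 'o. \<exists>fs :: nat \<Rightarrow> 'm.
      is_zero_obj C (Xs 0) \<and> Xs n = X \<and>
      (\<forall>k<n. fs k \<in> hom C (Xs k) (Xs (Suc k)) \<and> adm_mono C E (fs k) \<and> \<not> is_iso C (fs k))}"

definition elength :: "('o,'m) addcat \<Rightarrow> ('m \<times> 'm) set \<Rightarrow> 'o \<Rightarrow> enat" where
  "elength C E X = Sup (enat ` chain_lengths C E X)"

definition finite_exact :: "('o,'m) addcat \<Rightarrow> ('m \<times> 'm) set \<Rightarrow> bool" where
  "finite_exact C E \<longleftrightarrow> (\<forall>X\<in>cObj C. elength C E X < \<infinity>)"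

definition indecomposable :: "('o,'m) addcat \<Rightarrow> 'o \<Rightarrow> bool" where
  "indecomposable C X \<longleftrightarrow> X \<in> cObj C \<and> \<not> is_zero_obj C X \<and>
     (\<forall>A B i1 i2 p1 p2. A \<in> cObj C \<and> B \<in> cObj C \<and> is_biproduct C A B X i1 i2 p1 p2 \<longrightarrow>
        is_zero_obj C A \<or> is_zero_obj C B)"

definition gr_le :: "nat list \<Rightarrow> nat list \<Rightarrow> bool" where
  "gr_le x y \<longleftrightarrow> x = y \<or> strict_prefix x y \<or>
     (\<exists>i. i < length x \<and> i < length y \<and> take i x = take i y \<and> x ! i > y ! i)"

definition mu_seqs :: "('o,'m) addcat \<Rightarrow> ('m \<times> 'm) set \<Rightarrow> 'o \<Rightarrow> nat list set" where
  "mu_seqs C E X = {s. \<exists>n \<ge> 1. \<exists>Xs :: nat \<Rightarrow> 'o.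
      Xs (n - 1) = X \<and> (\<forall>k<n. indecomposable C (Xs k)) \<and>
      (\<forall>k. Suc k < n \<longrightarrow> epsub C E (Xs k) (Xs (Suc k))) \<and>
      s = map (\<lambda>k. the_enat (elength C E (Xs k))) [0..<n]}"

definition mu :: "('o,'m) addcat \<Rightarrow> ('m \<times> 'm) set \<Rightarrow> 'o \<Rightarrow> nat list" where
  "mu C E X = (THE m. m \<in> mu_seqs C E X \<and> (\<forall>s\<in>mu_seqs C E X. gr_le s m))"

end

theory Submission
  imports Defs
begin


definition grR :: "(nat \<times> nat) set" where "grR = {(a,b). b < a}"

lemma strict_prefix_take: "strict_prefix x y \<longleftrightarrow> length x < length y \<and> take (length x) y = x"
proof
  assume "strict_prefix x y"
  then obtain z where "y = x @ z" "z \<noteq> []" by (auto simp: strict_prefix_def prefix_def)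
  then show "length x < length y \<and> take (length x) y = x" by simp
next
  assume a: "length x < length y \<and> take (length x) y = x"
  then have "y = x @ drop (length x) y" by (metis append_take_drop_id)
  then have "prefix x y" unfolding prefix_def by blast
  moreover have "x \<noteq> y" using a by auto
  ultimately show "strict_prefix x y" by (simp add: strict_prefix_def)
qed

lemma gr_le_lexord: "gr_le x y \<longleftrightarrow> x = y \<or> (x,y) \<in> lexord grR"
  unfolding gr_le_def lexord_take_index_conv strict_prefix_take grR_def by auto

lemma grR_trans: "trans grR" unfolding grR_def trans_def by auto

lemma gr_le_refl: "gr_le x x" by (simp add: gr_le_def)

lemma gr_le_trans: "gr_le x y \<Longrightarrow> gr_le y z \<Longrightarrow> gr_le x z"
  unfolding gr_le_lexord using lexord_trans[OF _ _ grR_trans] by blast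

lemma gr_le_antisym: "gr_le x y \<Longrightarrow> gr_le y x \<Longrightarrow> x = y"
  unfolding gr_le_lexord using lexord_trans[OF _ _ grR_trans] lexord_irreflexive[of grR]
  unfolding grR_def by blast

lemma gr_le_total: "gr_le x y \<or> gr_le y x"
proof -
  have "\<forall>a b. (a,b)\<in>grR \<or> a=b \<or> (b,a)\<in>grR" unfolding grR_def by auto
  then show ?thesis unfolding gr_le_lexord using lexord_linear[of grR x y] by blast
qed

lemma gr_le_max:
  assumes "finite S" "S \<noteq> {}"
  shows "\<exists>m\<in>S. \<forall>s\<in>S. gr_le s m"
  using assms
proof (induction S rule: finite_ne_induct)
  case (singleton x) then show ?case by (simp add: gr_le_refl)
next
  case (insert x F)
  then obtain m where m: "m\<in>F" "\<forall>s\<in>F. gr_le s m" by blast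
  show ?case
  proof (cases "gr_le x m")
    case True then show ?thesis using m by auto
  next
    case False then have "gr_le m x" using gr_le_total by blast
    then show ?thesis using m gr_le_trans gr_le_refl by blast
  qed
qed

lemma comb:
  fixes p y :: "nat list"
  assumes "gr_le p y" "p \<noteq> y" "y \<noteq> []"
    and inc: "\<forall>i j. i < j \<longrightarrow> j < length y \<longrightarrow> y!i < y!j"
    and "last y \<le> a"
  shows "gr_le (p @ [a]) y"
proof -
  have bnd: "\<forall>k<length y. y!k \<le> last y"
  proof (intro allI impI)
    fix k assume k: "k < length y"
    have l: "last y = y ! (length y - 1)" using assms(3) last_conv_nth by blast
    show "y!k \<le> last y"
    proof (cases "k < length y - 1")
      case True then show ?thesis using inc l by (metis diff_less less_imp_le_nat zero_less_one k gr_zeroI less_nat_zero_code)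
    next
      case False then have "k = length y - 1" using k by linarith
      then show ?thesis using l by simp
    qed
  qed
  consider "strict_prefix p y" | "\<exists>i. i < length p \<and> i < length y \<and> take i p = take i y \<and> p ! i > y ! i"
    using assms(1,2) unfolding gr_le_def by blast
  then show ?thesis
  proof cases
    case 1
    then obtain z where z: "y = p @ z" "z \<noteq> []" by (metis prefix_def strict_prefix_def append_Nil2)
    let ?b = "y ! length p"
    have lp: "length p < length y" using z by simp
    have yb: "?b = hd z" using z by (simp add: hd_conv_nth nth_append)
    have "?b \<le> a" using bnd lp assms(5) by fastforce
    then consider "?b < a" | "?b = a" by linarith
    then show ?thesis
    proof cases
      case 1
      have "length p < length (p @ [a]) \<and> length p < length y \<and> take (length p) (p @ [a]) = take (length p) y
          \<and> (p @ [a]) ! length p > y ! length p"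
        using lp z 1 by (simp add: nth_append)
      then show ?thesis unfolding gr_le_def by blast
    next
      case 2
      have "length p = length y - 1"
      proof (rule ccontr)
        assume "length p \<noteq> length y - 1"
        then have "length p < length y - 1" using lp by linarith
        then have "?b < y ! (length y - 1)" using inc by auto
        then show False using 2 assms(5) last_conv_nth[OF assms(3)] by linarith
      qed
      moreover have "length y = length p + length z" using z by simp
      moreover have "length z \<noteq> 0" using z by simp
      ultimately have "length z = 1" by linarith
      then have "z = [hd z]" using z by (cases z) auto
      then show ?thesis using z yb 2 gr_le_refl by metis
    qed
  next
    case 2
    then obtain i where i: "i < length p" "i < length y" "take i p = take i y" "p ! i > y ! i" by blast
    then show ?thesis unfolding gr_le_def
      by (intro disjI2 disjI2 exI[of _ i]) (auto simp: nth_append)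
  qed
qed


section \<open>Category basics\<close>

lemma ex_pre: "exact_category C E \<Longrightarrow> is_preadditive C"
  unfolding exact_category_def is_additive_def by (elim conjE)

lemma pre_cat: "is_preadditive C \<Longrightarrow> is_category C"
  unfolding is_preadditive_def by (elim conjE)

lemma ex_cat: "exact_category C E \<Longrightarrow> is_category C"
  using ex_pre pre_cat by blast

lemma homD: "f \<in> hom C X Y \<Longrightarrow> f \<in> cArr C \<and> cDom C f = X \<and> cCod C f = Y"
  by (simp add: hom_def)

lemma homI: "f \<in> cArr C \<Longrightarrow> f \<in> hom C (cDom C f) (cCod C f)"
  by (simp add: hom_def)

lemma catD0:
  assumes "is_category C"
  shows "(\<forall>f\<in>cArr C. cDom C f \<in> cObj C \<and> cCod C f \<in> cObj C) \<and>
    (\<forall>X\<in>cObj C. cId C X \<in> hom C X X) \<and>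
    (\<forall>f\<in>cArr C. \<forall>g\<in>cArr C. cCod C f = cDom C g \<longrightarrow> cComp C g f \<in> hom C (cDom C f) (cCod C g)) \<and>
    (\<forall>f\<in>cArr C. cComp C (cId C (cCod C f)) f = f \<and> cComp C f (cId C (cDom C f)) = f) \<and>
    (\<forall>f\<in>cArr C. \<forall>g\<in>cArr C. \<forall>h\<in>cArr C. cCod C f = cDom C g \<and> cCod C g = cDom C h \<longrightarrow>
         cComp C h (cComp C g f) = cComp C (cComp C h g) f)"
  using assms unfolding is_category_def by assumption

lemmas catD = catD0[THEN conjunct1] catD0[THEN conjunct2, THEN conjunct1]
  catD0[THEN conjunct2, THEN conjunct2, THEN conjunct1]
  catD0[THEN conjunct2, THEN conjunct2, THEN conjunct2, THEN conjunct1]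
  catD0[THEN conjunct2, THEN conjunct2, THEN conjunct2, THEN conjunct2]

lemma hom_objs: "is_category C \<Longrightarrow> f \<in> hom C X Y \<Longrightarrow> X \<in> cObj C \<and> Y \<in> cObj C"
  using catD(1) homD by metis

lemma cat_id: "is_category C \<Longrightarrow> X \<in> cObj C \<Longrightarrow> cId C X \<in> hom C X X"
  using catD(2) by metis

lemma cat_comp: assumes "is_category C" "f \<in> hom C X Y" "g \<in> hom C Y Z" shows "cComp C g f \<in> hom C X Z"
proof -
  have "f \<in> cArr C" "g \<in> cArr C" "cCod C f = cDom C g" "cDom C f = X" "cCod C g = Z"
    using homD[OF assms(2)] homD[OF assms(3)] by auto
  then show ?thesis using catD(3)[OF assms(1)] by metis
qed

lemma cat_idl: assumes "is_category C" "f \<in> hom C X Y" shows "cComp C (cId C Y) f = f"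
proof -
  have "f \<in> cArr C" "cCod C f = Y" using homD[OF assms(2)] by auto
  then show ?thesis using catD(4)[OF assms(1)] by metis
qed

lemma cat_idr: assumes "is_category C" "f \<in> hom C X Y" shows "cComp C f (cId C X) = f"
proof -
  have "f \<in> cArr C" "cDom C f = X" using homD[OF assms(2)] by auto
  then show ?thesis using catD(4)[OF assms(1)] by metis
qed

lemma cat_assoc: assumes "is_category C" "f \<in> hom C X Y" "g \<in> hom C Y Z" "h \<in> hom C Z W"
  shows "cComp C h (cComp C g f) = cComp C (cComp C h g) f"
proof -
  have "f \<in> cArr C" "g \<in> cArr C" "h \<in> cArr C" "cCod C f = cDom C g" "cCod C g = cDom C h"
    using homD[OF assms(2)] homD[OF assms(3)] homD[OF assms(4)] by auto
  then show ?thesis using catD(5)[OF assms(1)] by blast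
qed

lemma preA:
  assumes "is_preadditive C" "X \<in> cObj C" "Y \<in> cObj C"
  shows "cZero C X Y \<in> hom C X Y \<and>
        (\<forall>f\<in>hom C X Y. \<forall>g\<in>hom C X Y. cAdd C f g \<in> hom C X Y) \<and>
        (\<forall>f\<in>hom C X Y. cNeg C f \<in> hom C X Y) \<and>
        (\<forall>f\<in>hom C X Y. \<forall>g\<in>hom C X Y. \<forall>h\<in>hom C X Y.
            cAdd C (cAdd C f g) h = cAdd C f (cAdd C g h)) \<and>
        (\<forall>f\<in>hom C X Y. \<forall>g\<in>hom C X Y. cAdd C f g = cAdd C g f) \<and>
        (\<forall>f\<in>hom C X Y. cAdd C f (cZero C X Y) = f) \<and>
        (\<forall>f\<in>hom C X Y. cAdd C f (cNeg C f) = cZero C X Y)"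
  using bspec[OF bspec[OF conjunct1[OF conjunct2[OF assms(1)[unfolded is_preadditive_def]]] assms(2)] assms(3)] .

lemma preB:
  assumes "is_preadditive C" "X \<in> cObj C" "Y \<in> cObj C" "Z \<in> cObj C"
  shows "(\<forall>f\<in>hom C X Y. \<forall>f'\<in>hom C X Y. \<forall>g\<in>hom C Y Z.
            cComp C g (cAdd C f f') = cAdd C (cComp C g f) (cComp C g f')) \<and>
        (\<forall>f\<in>hom C X Y. \<forall>g\<in>hom C Y Z. \<forall>g'\<in>hom C Y Z.
            cComp C (cAdd C g g') f = cAdd C (cComp C g f) (cComp C g' f))"
  using bspec[OF bspec[OF bspec[OF conjunct2[OF conjunct2[OF assms(1)[unfolded is_preadditive_def]]] assms(2)] assms(3)] assms(4)] .

lemma zero_hom: "is_preadditive C \<Longrightarrow> X \<in> cObj C \<Longrightarrow> Y \<in> cObj C \<Longrightarrow> cZero C X Y \<in> hom C X Y"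
  using preA[of C X Y] by blast

lemma neg_hom: "is_preadditive C \<Longrightarrow> X \<in> cObj C \<Longrightarrow> Y \<in> cObj C \<Longrightarrow> f \<in> hom C X Y \<Longrightarrow> cNeg C f \<in> hom C X Y"
  using preA[of C X Y] by blast

lemma add_zero: "is_preadditive C \<Longrightarrow> X \<in> cObj C \<Longrightarrow> Y \<in> cObj C \<Longrightarrow> f \<in> hom C X Y \<Longrightarrow> cAdd C f (cZero C X Y) = f"
  using preA[of C X Y] by blast

lemma add_neg: "is_preadditive C \<Longrightarrow> X \<in> cObj C \<Longrightarrow> Y \<in> cObj C \<Longrightarrow> f \<in> hom C X Y \<Longrightarrow> cAdd C f (cNeg C f) = cZero C X Y"
  using preA[of C X Y] by blast

lemma add_assoc: "is_preadditive C \<Longrightarrow> X \<in> cObj C \<Longrightarrow> Y \<in> cObj C \<Longrightarrow> f \<in> hom C X Y \<Longrightarrow> g \<in> hom C X Y \<Longrightarrow> h \<in> hom C X Y \<Longrightarrow>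
   cAdd C (cAdd C f g) h = cAdd C f (cAdd C g h)"
  using preA[of C X Y] by blast

lemma distr_l: "is_preadditive C \<Longrightarrow> X \<in> cObj C \<Longrightarrow> Y \<in> cObj C \<Longrightarrow> Z \<in> cObj C \<Longrightarrow> f \<in> hom C X Y \<Longrightarrow> f' \<in> hom C X Y \<Longrightarrow> g \<in> hom C Y Z \<Longrightarrow>
   cComp C g (cAdd C f f') = cAdd C (cComp C g f) (cComp C g f')"
  using preB[of C X Y Z] by blast

lemma distr_r: "is_preadditive C \<Longrightarrow> X \<in> cObj C \<Longrightarrow> Y \<in> cObj C \<Longrightarrow> Z \<in> cObj C \<Longrightarrow> f \<in> hom C X Y \<Longrightarrow> g \<in> hom C Y Z \<Longrightarrow> g' \<in> hom C Y Z \<Longrightarrow>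
   cComp C (cAdd C g g') f = cAdd C (cComp C g f) (cComp C g' f)"
  using preB[of C X Y Z] by blast

lemma idem_zero:
  assumes P: "is_preadditive C" and X: "X \<in> cObj C" and Z: "Z \<in> cObj C" and a: "a \<in> hom C X Z"
    and aa: "cAdd C a a = a"
  shows "a = cZero C X Z"
proof -
  have na: "cNeg C a \<in> hom C X Z" using neg_hom[OF P X Z a] .
  have "cZero C X Z = cAdd C a (cNeg C a)" using add_neg[OF P X Z a] by simp
  also have "\<dots> = cAdd C (cAdd C a a) (cNeg C a)" using aa by simp
  also have "\<dots> = cAdd C a (cAdd C a (cNeg C a))" using add_assoc[OF P X Z a a na] .
  also have "\<dots> = cAdd C a (cZero C X Z)" using add_neg[OF P X Z a] by simp
  also have "\<dots> = a" using add_zero[OF P X Z a] .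
  finally show ?thesis by simp
qed

lemma comp_zero_right:
  assumes P: "is_preadditive C" and X: "X \<in> cObj C" and g: "g \<in> hom C Y Z"
  shows "cComp C g (cZero C X Y) = cZero C X Z"
proof -
  have cat: "is_category C" using pre_cat[OF P] .
  have Y: "Y \<in> cObj C" and Z: "Z \<in> cObj C" using hom_objs[OF cat g] by auto
  have z: "cZero C X Y \<in> hom C X Y" using zero_hom[OF P X Y] .
  have zz: "cAdd C (cZero C X Y) (cZero C X Y) = cZero C X Y" using add_zero[OF P X Y z] .
  have a: "cComp C g (cZero C X Y) \<in> hom C X Z" using cat_comp[OF cat z g] .
  have "cComp C g (cAdd C (cZero C X Y) (cZero C X Y)) = cAdd C (cComp C g (cZero C X Y)) (cComp C g (cZero C X Y))"
    using distr_l[OF P X Y Z z z g] .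
  then show ?thesis using idem_zero[OF P X Z a] zz by simp
qed

lemma comp_zero_left:
  assumes P: "is_preadditive C" and Z: "Z \<in> cObj C" and f: "f \<in> hom C X Y"
  shows "cComp C (cZero C Y Z) f = cZero C X Z"
proof -
  have cat: "is_category C" using pre_cat[OF P] .
  have X: "X \<in> cObj C" and Y: "Y \<in> cObj C" using hom_objs[OF cat f] by auto
  have z: "cZero C Y Z \<in> hom C Y Z" using zero_hom[OF P Y Z] .
  have zz: "cAdd C (cZero C Y Z) (cZero C Y Z) = cZero C Y Z" using add_zero[OF P Y Z z] .
  have a: "cComp C (cZero C Y Z) f \<in> hom C X Z" using cat_comp[OF cat f z] .
  have "cComp C (cAdd C (cZero C Y Z) (cZero C Y Z)) f = cAdd C (cComp C (cZero C Y Z) f) (cComp C (cZero C Y Z) f)"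
    using distr_r[OF P X Y Z f z z] .
  then show ?thesis using idem_zero[OF P X Z a] zz by simp
qed


lemma kcD: "is_kc_pair C i d \<Longrightarrow> is_kernel C i d" "is_kc_pair C i d \<Longrightarrow> is_cokernel C d i"
  unfolding is_kc_pair_def by (elim conjE; assumption)+

lemma kcI: "is_kernel C i d \<Longrightarrow> is_cokernel C d i \<Longrightarrow> is_kc_pair C i d"
  unfolding is_kc_pair_def by (rule conjI)

lemma kerD: "is_kernel C i d \<Longrightarrow> i \<in> cArr C \<and> d \<in> cArr C \<and> cCod C i = cDom C d \<and>
     cComp C d i = cZero C (cDom C i) (cCod C d)"
  unfolding is_kernel_def by (elim conjE) (intro conjI; assumption)

lemma kerU: "is_kernel C i d \<Longrightarrow> T\<in>cObj C \<Longrightarrow> f\<in>hom C T (cDom C d) \<Longrightarrow> cComp C d f = cZero C T (cCod C d) \<Longrightarrow>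
        (\<exists>!g. g \<in> hom C T (cDom C i) \<and> cComp C i g = f)"
  unfolding is_kernel_def by (elim conjE) (drule bspec, assumption, drule bspec, assumption, drule mp, assumption, assumption)

lemma cokD: "is_cokernel C d i \<Longrightarrow> i \<in> cArr C \<and> d \<in> cArr C \<and> cCod C i = cDom C d \<and>
     cComp C d i = cZero C (cDom C i) (cCod C d)"
  unfolding is_cokernel_def by (elim conjE) (intro conjI; assumption)

lemma cokU: "is_cokernel C d i \<Longrightarrow> T\<in>cObj C \<Longrightarrow> f\<in>hom C (cCod C i) T \<Longrightarrow> cComp C f i = cZero C (cDom C i) T \<Longrightarrow>
        (\<exists>!g. g \<in> hom C (cCod C d) T \<and> cComp C g d = f)"
  unfolding is_cokernel_def by (elim conjE) (drule bspec, assumption, drule bspec, assumption, drule mp, assumption, assumption)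

lemma zeroD: "is_zero_obj C Z \<Longrightarrow> X \<in> cObj C \<Longrightarrow> f \<in> hom C Z X \<Longrightarrow> f' \<in> hom C Z X \<Longrightarrow> f = f'"
  "is_zero_obj C Z \<Longrightarrow> X \<in> cObj C \<Longrightarrow> g \<in> hom C X Z \<Longrightarrow> g' \<in> hom C X Z \<Longrightarrow> g = g'"
  "is_zero_obj C Z \<Longrightarrow> Z \<in> cObj C"
  unfolding is_zero_obj_def by blast+

lemma zeroI: "Z \<in> cObj C \<Longrightarrow> (\<And>X. X \<in> cObj C \<Longrightarrow> \<exists>!f. f \<in> hom C Z X) \<Longrightarrow> (\<And>X. X \<in> cObj C \<Longrightarrow> \<exists>!f. f \<in> hom C X Z)
   \<Longrightarrow> is_zero_obj C Z"
  unfolding is_zero_obj_def by blast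


section \<open>Isomorphisms and zero objects\<close>

lemma isoE:
  assumes "is_iso C i" "i \<in> hom C X Y"
  obtains g where "g \<in> hom C Y X" "cComp C g i = cId C X" "cComp C i g = cId C Y"
  using assms unfolding is_iso_def hom_def by auto

lemma iso_inv:
  assumes "is_iso C i" "i \<in> hom C X Y"
  obtains g where "g \<in> hom C Y X" "cComp C g i = cId C X" "cComp C i g = cId C Y" "is_iso C g"
proof -
  obtain g where g: "g \<in> hom C Y X" "cComp C g i = cId C X" "cComp C i g = cId C Y"
    using isoE[OF assms] .
  have "is_iso C g" unfolding is_iso_def using g assms(2) by (auto simp: hom_def)
  then show ?thesis using g that by blast
qed

lemma id_iso: "is_category C \<Longrightarrow> X \<in> cObj C \<Longrightarrow> is_iso C (cId C X)"
  unfolding is_iso_def using cat_id[of C X] cat_idl[of C "cId C X" X X] homD[of "cId C X" C X X]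
  by auto



lemma zero_iso:
  assumes P: "is_preadditive C" and K: "is_zero_obj C K" and i: "i \<in> hom C K X" and iso: "is_iso C i"
  shows "is_zero_obj C X"
proof -
  have cat: "is_category C" using P is_preadditive_def by blast
  have X: "X \<in> cObj C" and Kc: "K \<in> cObj C" using hom_objs[OF cat i] by auto
  obtain g where g: "g \<in> hom C X K" "cComp C g i = cId C K" "cComp C i g = cId C X"
    using isoE[OF iso i] .
  have "\<exists>!f. f \<in> hom C X Y" if Y: "Y \<in> cObj C" for Y
  proof
    show "cZero C X Y \<in> hom C X Y" using zero_hom[OF P X Y] .
  next
    fix f assume f: "f \<in> hom C X Y"
    have fi: "cComp C f i \<in> hom C K Y" "cComp C (cZero C X Y) i \<in> hom C K Y"
      using cat_comp[OF cat i f] cat_comp[OF cat i zero_hom[OF P X Y]] by auto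
    have eq: "cComp C f i = cComp C (cZero C X Y) i" using zeroD(1)[OF K Y fi(1) fi(2)] .
    have "f = cComp C f (cComp C i g)" using g cat_idr[OF cat f] by simp
    also have "\<dots> = cComp C (cComp C f i) g" using cat_assoc[OF cat g(1) i f] .
    also have "\<dots> = cComp C (cComp C (cZero C X Y) i) g" using eq by simp
    also have "\<dots> = cComp C (cZero C X Y) (cComp C i g)" using cat_assoc[OF cat g(1) i zero_hom[OF P X Y]] by simp
    also have "\<dots> = cZero C X Y" using g cat_idr[OF cat zero_hom[OF P X Y]] by simp
    finally show "f = cZero C X Y" .
  qed
  moreover have "\<exists>!f. f \<in> hom C Y X" if Y: "Y \<in> cObj C" for Y
  proof
    show "cZero C Y X \<in> hom C Y X" using zero_hom[OF P Y X] .
  next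
    fix f assume f: "f \<in> hom C Y X"
    have z: "cZero C Y X \<in> hom C Y X" using zero_hom[OF P Y X] .
    have fi: "cComp C g f \<in> hom C Y K" "cComp C g (cZero C Y X) \<in> hom C Y K"
      using cat_comp[OF cat f g(1)] cat_comp[OF cat z g(1)] by auto
    have eq: "cComp C g f = cComp C g (cZero C Y X)" using zeroD(2)[OF K Y fi(1) fi(2)] .
    have "f = cComp C (cComp C i g) f" using g cat_idl[OF cat f] by simp
    also have "\<dots> = cComp C i (cComp C g f)" using cat_assoc[OF cat f g(1) i] by simp
    also have "\<dots> = cComp C i (cComp C g (cZero C Y X))" using eq by simp
    also have "\<dots> = cComp C (cComp C i g) (cZero C Y X)" using cat_assoc[OF cat z g(1) i] by simp
    also have "\<dots> = cZero C Y X" using g cat_idl[OF cat z] by simp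
    finally show "f = cZero C Y X" .
  qed
  ultimately show ?thesis using zeroI[OF X] by blast
qed

lemma zero_iso_back:
  assumes P: "is_preadditive C" and K: "is_zero_obj C Y" and i: "i \<in> hom C X Y" and iso: "is_iso C i"
  shows "is_zero_obj C X"
proof -
  obtain g where "g \<in> hom C Y X" "is_iso C g" using iso_inv[OF iso i] by blast
  then show ?thesis using zero_iso[OF P K] by blast
qed



lemma comp_noniso:
  assumes cat: "is_category C" and f: "f \<in> hom C W X" and i: "i \<in> hom C X Y" and iso: "is_iso C i"
    and ni: "\<not> is_iso C f"
  shows "\<not> is_iso C (cComp C i f)"
proof
  assume a: "is_iso C (cComp C i f)"
  have if_: "cComp C i f \<in> hom C W Y" using cat_comp[OF cat f i] .
  obtain h where h: "h \<in> hom C Y W" "cComp C h (cComp C i f) = cId C W" "cComp C (cComp C i f) h = cId C Y"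
    using isoE[OF a if_] .
  obtain g where g: "g \<in> hom C Y X" "cComp C g i = cId C X" "cComp C i g = cId C Y"
    using isoE[OF iso i] .
  define k where "k = cComp C h i"
  have k: "k \<in> hom C X W" unfolding k_def using cat_comp[OF cat i h(1)] .
  have fk: "cComp C f k \<in> hom C X X" using cat_comp[OF cat k f] .
  have 1: "cComp C k f = cId C W" unfolding k_def using h cat_assoc[OF cat f i h(1)] by simp
  have "cComp C f k = cComp C (cId C X) (cComp C f k)" using cat_idl[OF cat fk] by simp
  also have "\<dots> = cComp C (cComp C g i) (cComp C f k)" using g by simp
  also have "\<dots> = cComp C g (cComp C i (cComp C f k))" using cat_assoc[OF cat fk i g(1)] by simp
  also have "cComp C i (cComp C f k) = cComp C (cComp C i f) k" using cat_assoc[OF cat k f i] .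
  also have "\<dots> = cComp C (cComp C (cComp C i f) h) i" unfolding k_def using cat_assoc[OF cat i h(1) if_] .
  also have "\<dots> = i" using h cat_idl[OF cat i] by simp
  finally have 2: "cComp C f k = cId C X" using g by simp
  have "is_iso C f" unfolding is_iso_def using f k 1 2 by (auto simp: hom_def)
  then show False using ni by simp
qed



lemma exD0:
  assumes "exact_category C E"
  shows "(\<forall>(i,d)\<in>E. is_kc_pair C i d) \<and>
     (\<forall>i d i' d'. (i,d) \<in> E \<and> is_kc_pair C i' d' \<and> iso_pairs C i d i' d' \<longrightarrow> (i',d') \<in> E) \<and>
     (\<forall>X\<in>cObj C. adm_mono C E (cId C X)) \<and>
     (\<forall>X\<in>cObj C. adm_epi C E (cId C X)) \<and>
     (\<forall>i j. adm_mono C E i \<and> adm_mono C E j \<and> cCod C i = cDom C j \<longrightarrow> adm_mono C E (cComp C j i))"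
  using assms unfolding exact_category_def by (elim conjE) (intro conjI; assumption)

lemmas exD = exD0[THEN conjunct1] exD0[THEN conjunct2, THEN conjunct1]
  exD0[THEN conjunct2, THEN conjunct2, THEN conjunct1]
  exD0[THEN conjunct2, THEN conjunct2, THEN conjunct2, THEN conjunct1]
  exD0[THEN conjunct2, THEN conjunct2, THEN conjunct2, THEN conjunct2]

lemma adm_mono_comp:
  assumes "exact_category C E" "adm_mono C E i" "adm_mono C E j" "cCod C i = cDom C j"
  shows "adm_mono C E (cComp C j i)"
  using exD(5)[OF assms(1)] assms(2-4) by blast

lemma ex_closure:
  assumes "exact_category C E" "(i,d) \<in> E" "is_kc_pair C i' d'" "iso_pairs C i d i' d'"
  shows "(i',d') \<in> E"
  using exD(2)[OF assms(1)] assms(2-4) by blast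

lemma ex_kc: "exact_category C E \<Longrightarrow> (i,d) \<in> E \<Longrightarrow> is_kc_pair C i d"
  using exD(1) by fastforce

lemma ex_idmono: "exact_category C E \<Longrightarrow> X \<in> cObj C \<Longrightarrow> adm_mono C E (cId C X)"
  using exD(3) by blast

lemma ex_idepi: "exact_category C E \<Longrightarrow> X \<in> cObj C \<Longrightarrow> adm_epi C E (cId C X)"
  using exD(4) by blast



lemma iso_adm_mono:
  assumes EC: "exact_category C E" and g: "g \<in> hom C Y X" and iso: "is_iso C g"
  shows "adm_mono C E g"
proof -
  have P: "is_preadditive C" using ex_pre[OF EC] .
  have cat: "is_category C" using ex_cat[OF EC] .
  have Y: "Y \<in> cObj C" and X: "X \<in> cObj C" using hom_objs[OF cat g] by auto
  obtain i where i: "i \<in> hom C X Y" "cComp C i g = cId C Y" "cComp C g i = cId C X"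
    using isoE[OF iso g] by blast
  have "adm_mono C E (cId C Y)" using ex_idmono[OF EC Y] .
  then obtain d where dE: "(cId C Y, d) \<in> E" unfolding adm_mono_def by blast
  have kc: "is_kc_pair C (cId C Y) d" using ex_kc[OF EC dE] .
  have idY: "cId C Y \<in> hom C Y Y" using cat_id[OF cat Y] .
  have ker: "is_kernel C (cId C Y) d" using kcD(1)[OF kc] .
  have cok: "is_cokernel C d (cId C Y)" using kcD(2)[OF kc] .
  define Z where "Z = cCod C d"
  have dcod: "cDom C d = Y" using kerD[OF ker] homD[OF idY] by simp
  have darr: "d \<in> cArr C" using kerD[OF ker] by simp
  have d: "d \<in> hom C Y Z" using darr dcod Z_def by (simp add: hom_def)
  have Z: "Z \<in> cObj C" using hom_objs[OF cat d] by auto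
  have e1: "cComp C d (cId C Y) = cZero C (cDom C (cId C Y)) (cCod C d)" using kerD[OF ker] by (elim conjE)
  have e2: "cDom C (cId C Y) = Y" using homD[OF idY] by (elim conjE)
  have "cComp C d (cId C Y) = cZero C Y Z" using e1 e2 Z_def by simp
  then have d0: "d = cZero C Y Z" using cat_idr[OF cat d] by simp
  have uniq: "h = h'" if T: "T \<in> cObj C" and h: "h \<in> hom C Z T" and h': "h' \<in> hom C Z T" for T h h'
  proof -
    have z: "cZero C Y T \<in> hom C (cCod C (cId C Y)) T" using zero_hom[OF P Y T] idY by (simp add: hom_def)
    have "cComp C (cZero C Y T) (cId C Y) = cZero C (cDom C (cId C Y)) T"
      using cat_idr[OF cat zero_hom[OF P Y T]] idY by (simp add: hom_def)
    then have ex1: "\<exists>!w. w \<in> hom C (cCod C d) T \<and> cComp C w d = cZero C Y T"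
      using cokU[OF cok T z] by simp
    have "cComp C h d = cZero C Y T" "cComp C h' d = cZero C Y T"
      using d0 comp_zero_right[OF P Y h] comp_zero_right[OF P Y h'] by auto
    then show ?thesis using ex1 h h' Z_def by blast
  qed
  define d' where "d' = cZero C X Z"
  have d': "d' \<in> hom C X Z" unfolding d'_def using zero_hom[OF P X Z] .
  have d'g: "cComp C d' g = cZero C Y Z" unfolding d'_def using comp_zero_left[OF P Z g] .
  have isker: "is_kernel C g d'"
    unfolding is_kernel_def
  proof (intro conjI ballI impI)
    show "g \<in> cArr C" "d' \<in> cArr C" "cCod C g = cDom C d'" using g d' by (auto simp: hom_def)
    show "cComp C d' g = cZero C (cDom C g) (cCod C d')" using d'g g d' by (simp add: hom_def)
  next
    fix T f assume T: "T \<in> cObj C" and f: "f \<in> hom C T (cDom C d')"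
    have f': "f \<in> hom C T X" using f d' by (simp add: hom_def)
    show "\<exists>!w. w \<in> hom C T (cDom C g) \<and> cComp C g w = f"
    proof
      show "cComp C i f \<in> hom C T (cDom C g) \<and> cComp C g (cComp C i f) = f"
        using cat_comp[OF cat f' i(1)] g cat_assoc[OF cat f' i(1) g] i cat_idl[OF cat f']
        by (simp add: hom_def)
    next
      fix w assume w: "w \<in> hom C T (cDom C g) \<and> cComp C g w = f"
      then have w': "w \<in> hom C T Y" using g by (simp add: hom_def)
      have "w = cComp C (cComp C i g) w" using i cat_idl[OF cat w'] by simp
      also have "\<dots> = cComp C i f" using cat_assoc[OF cat w' g i(1)] w by simp
      finally show "w = cComp C i f" .
    qed
  qed
  have iscok: "is_cokernel C d' g"
    unfolding is_cokernel_def
  proof (intro conjI ballI impI)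
    show "g \<in> cArr C" "d' \<in> cArr C" "cCod C g = cDom C d'" using g d' by (auto simp: hom_def)
    show "cComp C d' g = cZero C (cDom C g) (cCod C d')" using d'g g d' by (simp add: hom_def)
  next
    fix T f assume T: "T \<in> cObj C" and f: "f \<in> hom C (cCod C g) T"
      and fg: "cComp C f g = cZero C (cDom C g) T"
    have f': "f \<in> hom C X T" using f g by (simp add: hom_def)
    have fg': "cComp C f g = cZero C Y T" using fg g by (simp add: hom_def)
    have "f = cComp C f (cComp C g i)" using i cat_idr[OF cat f'] by simp
    also have "\<dots> = cComp C (cComp C f g) i" using cat_assoc[OF cat i(1) g f'] .
    also have "\<dots> = cZero C X T" using fg' comp_zero_left[OF P T i(1)] by simp
    finally have f0: "f = cZero C X T" .
    show "\<exists>!w. w \<in> hom C (cCod C d') T \<and> cComp C w d' = f"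
    proof
      show "cZero C Z T \<in> hom C (cCod C d') T \<and> cComp C (cZero C Z T) d' = f"
        using zero_hom[OF P Z T] d' f0 comp_zero_left[OF P T d'] unfolding d'_def
        by (simp add: hom_def comp_zero_right[OF P X zero_hom[OF P Z T]])
    next
      fix w assume "w \<in> hom C (cCod C d') T \<and> cComp C w d' = f"
      then have "w \<in> hom C Z T" using d' by (simp add: hom_def)
      then show "w = cZero C Z T" using uniq[OF T _ zero_hom[OF P Z T]] by blast
    qed
  qed
  have ip: "iso_pairs C (cId C Y) d g d'"
    unfolding iso_pairs_def
  proof (intro exI conjI)
    show "cId C Y \<in> hom C (cDom C (cId C Y)) (cDom C g)" using idY g by (simp add: hom_def)
    show "g \<in> hom C (cCod C (cId C Y)) (cCod C g)" using idY g by (simp add: hom_def)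
    show "cId C Z \<in> hom C (cCod C d) (cCod C d')" using cat_id[OF cat Z] d' Z_def by (simp add: hom_def)
    show "is_iso C (cId C Y)" "is_iso C g" "is_iso C (cId C Z)" using id_iso[OF cat] Y Z iso by auto
    show "cComp C g (cId C Y) = cComp C g (cId C Y)" ..
    show "cComp C d' g = cComp C (cId C Z) d" using d'g d0 cat_idl[OF cat d] by simp
  qed
  have "(g, d') \<in> E" using ex_closure[OF EC dE kcI[OF isker iscok] ip] .
  then show ?thesis unfolding adm_mono_def by blast
qed



lemma zero_mono_exists:
  assumes EC: "exact_category C E" and X: "X \<in> cObj C"
  shows "\<exists>K i. is_zero_obj C K \<and> i \<in> hom C K X \<and> adm_mono C E i"
proof -
  have P: "is_preadditive C" using ex_pre[OF EC] .
  have cat: "is_category C" using ex_cat[OF EC] .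
  have "adm_epi C E (cId C X)" using ex_idepi[OF EC X] .
  then obtain i where iE: "(i, cId C X) \<in> E" unfolding adm_epi_def by blast
  have ker: "is_kernel C i (cId C X)" using kcD(1)[OF ex_kc[OF EC iE]] .
  have idX: "cId C X \<in> hom C X X" using cat_id[OF cat X] .
  define K where "K = cDom C i"
  have dI: "cDom C i = K" using K_def by simp
  have i: "i \<in> hom C K X" using kerD[OF ker] homD[OF idX] dI by (simp add: hom_def)
  have Kc: "K \<in> cObj C" using hom_objs[OF cat i] by auto
  have "cComp C (cId C X) i = cZero C K X" using kerD[OF ker] homD[OF idX] dI by simp
  then have i0: "i = cZero C K X" using cat_idl[OF cat i] by simp
  have "\<exists>!g. g \<in> hom C K (cDom C i) \<and> cComp C i g = i"
  proof -
    have "i \<in> hom C K (cDom C (cId C X))" using i idX by (simp add: hom_def)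
    moreover have "cComp C (cId C X) i = cZero C K (cCod C (cId C X))" using cat_idl[OF cat i] i0 idX
      by (simp add: hom_def)
    ultimately show ?thesis using kerU[OF ker Kc] by blast
  qed
  moreover have "cId C K \<in> hom C K (cDom C i) \<and> cComp C i (cId C K) = i"
    using cat_id[OF cat Kc] cat_idr[OF cat i] dI by simp
  moreover have "cZero C K K \<in> hom C K (cDom C i) \<and> cComp C i (cZero C K K) = i"
    using zero_hom[OF P Kc Kc] comp_zero_right[OF P Kc i] i0 dI by simp
  ultimately have idK: "cId C K = cZero C K K" by blast
  have "is_zero_obj C K" unfolding is_zero_obj_def
  proof (intro conjI ballI Kc)
    fix Y assume Y: "Y \<in> cObj C"
    show "\<exists>!f. f \<in> hom C K Y"
    proof
      show "cZero C K Y \<in> hom C K Y" using zero_hom[OF P Kc Y] .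
    next
      fix f assume f: "f \<in> hom C K Y"
      have "f = cComp C f (cId C K)" using cat_idr[OF cat f] by simp
      then show "f = cZero C K Y" using idK comp_zero_right[OF P Kc f] by simp
    qed
    show "\<exists>!f. f \<in> hom C Y K"
    proof
      show "cZero C Y K \<in> hom C Y K" using zero_hom[OF P Y Kc] .
    next
      fix f assume f: "f \<in> hom C Y K"
      have "f = cComp C (cId C K) f" using cat_idl[OF cat f] by simp
      then show "f = cZero C Y K" using idK comp_zero_left[OF P Kc f] by simp
    qed
  qed
  then show ?thesis using i iE unfolding adm_mono_def by blast
qed



lemma fin_len: "finite_exact C E \<Longrightarrow> X \<in> cObj C \<Longrightarrow> elength C E X \<noteq> \<infinity>"
  unfolding finite_exact_def by auto

lemma chain_nonempty:
  assumes EC: "exact_category C E" and X: "X \<in> cObj C"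
  shows "chain_lengths C E X \<noteq> {}"
proof (cases "is_zero_obj C X")
  case True
  have "0 \<in> chain_lengths C E X" unfolding chain_lengths_def
    by (rule CollectI, rule exI[of _ "\<lambda>_. X"], rule exI[of _ "\<lambda>_. undefined"]) (use True in auto)
  then show ?thesis by blast
next
  case False
  obtain K i where K: "is_zero_obj C K" and i: "i \<in> hom C K X" and am: "adm_mono C E i"
    using zero_mono_exists[OF EC X] by blast
  have "\<not> is_iso C i" using zero_iso[OF ex_pre[OF EC] K i] False by blast
  then have "1 \<in> chain_lengths C E X" unfolding chain_lengths_def
    by (intro CollectI exI[of _ "\<lambda>k. if k = 0 then K else X"] exI[of _ "\<lambda>_. i"]) (use K i am in auto)
  then show ?thesis by blast
qed

lemma elength_attained:
  assumes EC: "exact_category C E" and FE: "finite_exact C E" and X: "X \<in> cObj C"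
  shows "\<exists>n \<in> chain_lengths C E X. elength C E X = enat n"
proof -
  let ?A = "chain_lengths C E X"
  have ne: "?A \<noteq> {}" using chain_nonempty[OF EC X] .
  have fin: "Sup (enat ` ?A) \<noteq> \<infinity>" using fin_len[OF FE X] unfolding elength_def .
  have "finite (enat ` ?A)"
  proof (rule ccontr)
    assume "\<not> finite (enat ` ?A)"
    then have "Sup (enat ` ?A) = \<infinity>" using ne unfolding Sup_enat_def by auto
    then show False using fin by simp
  qed
  then have "Sup (enat ` ?A) = Max (enat ` ?A)" using ne unfolding Sup_enat_def by auto
  moreover have "Max (enat ` ?A) \<in> enat ` ?A" using Max_in \<open>finite (enat ` ?A)\<close> ne by blast
  ultimately show ?thesis unfolding elength_def by auto
qed

lemma elength_upper: "n \<in> chain_lengths C E X \<Longrightarrow> enat n \<le> elength C E X"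
  unfolding elength_def by (simp add: Sup_upper)

lemma epsub_objs: assumes "exact_category C E" "epsub C E X Y" shows "X \<in> cObj C \<and> Y \<in> cObj C"
proof -
  from assms(2) obtain i where "i \<in> hom C X Y" unfolding epsub_def by blast
  then show ?thesis using hom_objs[OF ex_cat[OF assms(1)]] by blast
qed

lemma epsub_less:
  assumes EC: "exact_category C E" and FE: "finite_exact C E" and sub: "epsub C E X Y"
  shows "elength C E X < elength C E Y"
proof -
  obtain i where i: "i \<in> hom C X Y" "adm_mono C E i" "\<not> is_iso C i" using sub unfolding epsub_def by blast
  have X: "X \<in> cObj C" using epsub_objs[OF EC sub] by blast
  obtain n where n: "n \<in> chain_lengths C E X" "elength C E X = enat n" using elength_attained[OF EC FE X] by blast
  obtain Xs fs where c: "is_zero_obj C (Xs 0)" "Xs n = X"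
      "\<forall>k<n. fs k \<in> hom C (Xs k) (Xs (Suc k)) \<and> adm_mono C E (fs k) \<and> \<not> is_iso C (fs k)"
    using n(1) unfolding chain_lengths_def by blast
  have "Suc n \<in> chain_lengths C E Y" unfolding chain_lengths_def
  proof (intro CollectI exI[of _ "Xs(Suc n := Y)"] exI[of _ "fs(n := i)"] conjI allI impI)
    show "is_zero_obj C ((Xs(Suc n := Y)) 0)" using c by simp
    show "(Xs(Suc n := Y)) (Suc n) = Y" by simp
    fix k assume k: "k < Suc n"
    show "(fs(n := i)) k \<in> hom C ((Xs(Suc n := Y)) k) ((Xs(Suc n := Y)) (Suc k))"
      "adm_mono C E ((fs(n := i)) k)" "\<not> is_iso C ((fs(n := i)) k)"
      using c i k by (cases "k = n"; auto)+
  qed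
  then have "enat (Suc n) \<le> elength C E Y" by (rule elength_upper)
  moreover have "enat n < enat (Suc n)" by simp
  ultimately show ?thesis using n(2) by (metis order_less_le_trans)
qed

lemma iso_chain_sub:
  assumes EC: "exact_category C E" and i: "i \<in> hom C X Y" and am: "adm_mono C E i" and iso: "is_iso C i"
  shows "chain_lengths C E X \<subseteq> chain_lengths C E Y"
proof
  fix n assume "n \<in> chain_lengths C E X"
  then obtain Xs fs where c: "is_zero_obj C (Xs 0)" "Xs n = X"
      "\<forall>k<n. fs k \<in> hom C (Xs k) (Xs (Suc k)) \<and> adm_mono C E (fs k) \<and> \<not> is_iso C (fs k)"
    unfolding chain_lengths_def by blast
  have cat: "is_category C" using ex_cat[OF EC] .
  show "n \<in> chain_lengths C E Y"
  proof (cases n)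
    case 0
    then have "is_zero_obj C Y" using zero_iso[OF ex_pre[OF EC] _ i iso] c by simp
    then show ?thesis unfolding chain_lengths_def 0
      by (intro CollectI exI[of _ "\<lambda>_. Y"] exI[of _ fs]) auto
  next
    case (Suc m)
    have fm: "fs m \<in> hom C (Xs m) X" "adm_mono C E (fs m)" "\<not> is_iso C (fs m)" using c Suc by auto
    have g1: "cComp C i (fs m) \<in> hom C (Xs m) Y" using cat_comp[OF cat fm(1) i] .
    have g2: "adm_mono C E (cComp C i (fs m))"
      using adm_mono_comp[OF EC fm(2) am] fm(1) i by (simp add: hom_def)
    have g3: "\<not> is_iso C (cComp C i (fs m))" using comp_noniso[OF cat fm(1) i iso fm(3)] .
    show ?thesis unfolding chain_lengths_def Suc
    proof (intro CollectI exI[of _ "Xs(Suc m := Y)"] exI[of _ "fs(m := cComp C i (fs m))"] conjI allI impI)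
      show "is_zero_obj C ((Xs(Suc m := Y)) 0)" using c by simp
      show "(Xs(Suc m := Y)) (Suc m) = Y" by simp
      fix k assume k: "k < Suc m"
      show "(fs(m := cComp C i (fs m))) k \<in> hom C ((Xs(Suc m := Y)) k) ((Xs(Suc m := Y)) (Suc k))"
        "adm_mono C E ((fs(m := cComp C i (fs m))) k)" "\<not> is_iso C ((fs(m := cComp C i (fs m))) k)"
        using c g1 g2 g3 k Suc by (cases "k = m"; auto)+
    qed
  qed
qed

lemma iso_elength:
  assumes EC: "exact_category C E" and i: "i \<in> hom C X Y" and am: "adm_mono C E i" and iso: "is_iso C i"
  shows "elength C E X = elength C E Y"
proof -
  obtain g where g: "g \<in> hom C Y X" "is_iso C g" using iso_inv[OF iso i] by blast
  have "adm_mono C E g" using iso_adm_mono[OF EC g(1,2)] .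
  then have "chain_lengths C E X = chain_lengths C E Y"
    using iso_chain_sub[OF EC i am iso] iso_chain_sub[OF EC g(1) _ g(2)] by blast
  then show ?thesis unfolding elength_def by simp
qed

lemma epsub_iso_comp:
  assumes EC: "exact_category C E" and s: "epsub C E W X" and i: "i \<in> hom C X Y"
    and am: "adm_mono C E i" and iso: "is_iso C i"
  shows "epsub C E W Y"
proof -
  have cat: "is_category C" using ex_cat[OF EC] .
  obtain f where f: "f \<in> hom C W X" "adm_mono C E f" "\<not> is_iso C f" using s unfolding epsub_def by blast
  show ?thesis unfolding epsub_def
    using cat_comp[OF cat f(1) i] adm_mono_comp[OF EC f(2) am] f(1) i comp_noniso[OF cat f(1) i iso f(3)]
    by (auto simp: hom_def)
qed

lemma the_enat_less:
  "x < y \<Longrightarrow> x \<noteq> \<infinity> \<Longrightarrow> y \<noteq> \<infinity> \<Longrightarrow> the_enat x < the_enat y"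
  by (cases x; cases y) auto

lemma the_enat_le:
  "x \<le> y \<Longrightarrow> x \<noteq> \<infinity> \<Longrightarrow> y \<noteq> \<infinity> \<Longrightarrow> the_enat x \<le> the_enat y"
  by (cases x; cases y) auto

lemma ind_obj: "indecomposable C X \<Longrightarrow> X \<in> cObj C"
  unfolding indecomposable_def by blast

lemma ms_props:
  assumes EC: "exact_category C E" and FE: "finite_exact C E" and s: "s \<in> mu_seqs C E X"
  shows "s \<noteq> [] \<and> last s = the_enat (elength C E X) \<and> (\<forall>i j. i < j \<longrightarrow> j < length s \<longrightarrow> s!i < s!j)"
proof -
  obtain n Xs where n: "n \<ge> 1" "Xs (n - 1) = X" "\<forall>k<n. indecomposable C (Xs k)"
    "\<forall>k. Suc k < n \<longrightarrow> epsub C E (Xs k) (Xs (Suc k))"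
    "s = map (\<lambda>k. the_enat (elength C E (Xs k))) [0..<n]"
    using s unfolding mu_seqs_def by blast
  define f where "f = (\<lambda>k. the_enat (elength C E (Xs k)))"
  have step: "f k < f (Suc k)" if "Suc k < n" for k
  proof -
    have lt: "elength C E (Xs k) < elength C E (Xs (Suc k))" using epsub_less[OF EC FE] n(4) that by blast
    have i1: "indecomposable C (Xs k)" using n(3) that by simp
    have i2: "indecomposable C (Xs (Suc k))" using n(3) that by simp
    show ?thesis unfolding f_def
      using the_enat_less[OF lt fin_len[OF FE ind_obj[OF i1]] fin_len[OF FE ind_obj[OF i2]]] .
  qed
  have inc: "i < j \<longrightarrow> j < n \<longrightarrow> f i < f j" for i j
  proof (induction j)
    case 0 then show ?case by simp
  next
    case (Suc j)
    then show ?case using step by (metis Suc_lessD less_Suc_eq order.strict_trans)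
  qed
  have len: "length s = n" using n(5) by simp
  have nth: "k < n \<Longrightarrow> s ! k = f k" for k using n(5) f_def by simp
  have "s \<noteq> []" using len n(1) by auto
  moreover have "last s = f (n - 1)" using \<open>s \<noteq> []\<close> len nth last_conv_nth[of s] n(1) by simp
  ultimately show ?thesis using inc nth len n(2) f_def by auto
qed

lemma ms_single: "indecomposable C X \<Longrightarrow> [the_enat (elength C E X)] \<in> mu_seqs C E X"
  unfolding mu_seqs_def
  by (intro CollectI exI[of _ 1] conjI exI[of _ "\<lambda>_. X"]) auto

lemma ms_finite:
  assumes EC: "exact_category C E" and FE: "finite_exact C E"
  shows "finite (mu_seqs C E X)"
proof -
  let ?L = "the_enat (elength C E X)"
  have "mu_seqs C E X \<subseteq> {s. set s \<subseteq> {0..?L} \<and> length s \<le> Suc ?L}"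
  proof
    fix s assume s: "s \<in> mu_seqs C E X"
    note p = ms_props[OF EC FE s]
    have le: "\<forall>k<length s. s!k \<le> ?L"
    proof (intro allI impI)
      fix k assume k: "k < length s"
      have l: "last s = s ! (length s - 1)" using p last_conv_nth by blast
      show "s!k \<le> ?L"
      proof (cases "k < length s - 1")
        case True then show ?thesis using p l by (metis diff_less less_imp_le_nat zero_less_one k gr_zeroI less_nat_zero_code)
      next
        case False then have "k = length s - 1" using k by linarith
        then show ?thesis using l p by simp
      qed
    qed
    have set: "set s \<subseteq> {0..?L}" using le by (auto simp: in_set_conv_nth)
    have "distinct s" unfolding distinct_conv_nth using p by (metis linorder_neqE_nat order.irrefl)
    then have "length s = card (set s)" by (simp add: distinct_card)
    also have "\<dots> \<le> card {0..?L}" using set by (intro card_mono) auto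
    finally show "s \<in> {s. set s \<subseteq> {0..?L} \<and> length s \<le> Suc ?L}" using set by simp
  qed
  moreover have "finite {s. set s \<subseteq> {0..?L} \<and> length s \<le> Suc ?L}"
    by (rule finite_lists_length_le) simp
  ultimately show ?thesis by (rule finite_subset)
qed

lemma mu_spec:
  assumes EC: "exact_category C E" and FE: "finite_exact C E" and X: "indecomposable C X"
  shows "mu C E X \<in> mu_seqs C E X \<and> (\<forall>s\<in>mu_seqs C E X. gr_le s (mu C E X))"
proof -
  have ne: "mu_seqs C E X \<noteq> {}" using ms_single[OF X] by blast
  obtain m where m: "m \<in> mu_seqs C E X" "\<forall>s\<in>mu_seqs C E X. gr_le s m"
    using gr_le_max[OF ms_finite[OF EC FE] ne] by blast
  have "mu C E X = m" unfolding mu_def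
    by (rule the_equality) (use m gr_le_antisym in blast)+
  then show ?thesis using m by simp
qed

lemma ms_extend:
  assumes s: "s \<in> mu_seqs C E W" and sub: "epsub C E W X" and X: "indecomposable C X"
  shows "s @ [the_enat (elength C E X)] \<in> mu_seqs C E X"
proof -
  obtain n Xs where n: "n \<ge> 1" "Xs (n - 1) = W" "\<forall>k<n. indecomposable C (Xs k)"
    "\<forall>k. Suc k < n \<longrightarrow> epsub C E (Xs k) (Xs (Suc k))"
    "s = map (\<lambda>k. the_enat (elength C E (Xs k))) [0..<n]"
    using s unfolding mu_seqs_def by blast
  let ?Xs = "Xs(n := X)"
  have m: "map (\<lambda>k. the_enat (elength C E (?Xs k))) [0..<n] = s"
    unfolding n(5) by (rule map_cong) auto
  show ?thesis unfolding mu_seqs_def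
  proof (intro CollectI exI[of _ "Suc n"] conjI exI[of _ ?Xs] allI impI)
    show "1 \<le> Suc n" by simp
    show "?Xs (Suc n - 1) = X" by simp
    fix k
    show "k < Suc n \<Longrightarrow> indecomposable C (?Xs k)" using n(3) X by (cases "k = n") auto
    show "Suc k < Suc n \<Longrightarrow> epsub C E (?Xs k) (?Xs (Suc k))"
      using n sub by (cases "Suc k = n") auto
  next
    show "s @ [the_enat (elength C E X)] = map (\<lambda>k. the_enat (elength C E (?Xs k))) [0..<Suc n]"
      using m by simp
  qed
qed

lemma ms_butlast:
  assumes s: "s \<in> mu_seqs C E X" and l: "length s \<ge> 2"
  shows "\<exists>X'. indecomposable C X' \<and> epsub C E X' X \<and> butlast s \<in> mu_seqs C E X'"
proof -
  obtain n Xs where n: "n \<ge> 1" "Xs (n - 1) = X" "\<forall>k<n. indecomposable C (Xs k)"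
    "\<forall>k. Suc k < n \<longrightarrow> epsub C E (Xs k) (Xs (Suc k))"
    "s = map (\<lambda>k. the_enat (elength C E (Xs k))) [0..<n]"
    using s unfolding mu_seqs_def by blast
  have n2: "n \<ge> 2" using l n(5) by simp
  have ind: "indecomposable C (Xs (n - 2))" using n(3) n2 by simp
  have ep: "epsub C E (Xs (n - 2)) X" using n(4)[rule_format, of "n - 2"] n2 n(2)
    by (simp add: Suc_diff_Suc numeral_2_eq_2)
  have bl: "butlast s = map (\<lambda>k. the_enat (elength C E (Xs k))) [0..<n - 1]"
    unfolding n(5) map_butlast[symmetric] by (cases n) simp_all
  have "butlast s \<in> mu_seqs C E (Xs (n - 2))" unfolding mu_seqs_def
    by (intro CollectI exI[of _ "n - 1"] conjI exI[of _ Xs] allI impI)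
       (use n n2 bl in \<open>auto simp: diff_diff_add numeral_2_eq_2\<close>)
  then show ?thesis using ind ep by blast
qed


theorem theorem7p7:
  fixes C :: "('o, 'm) addcat" and E :: "('m \<times> 'm) set"
  assumes "exact_category C E" and "finite_exact C E"
  shows "(\<forall>X Y. indecomposable C X \<and> indecomposable C Y \<and> esub C E X Y
            \<longrightarrow> gr_le (mu C E X) (mu C E Y))
       \<and> (\<forall>X Y. indecomposable C X \<and> indecomposable C Y \<and> mu C E X = mu C E Y
            \<longrightarrow> elength C E X = elength C E Y)
       \<and> (\<forall>X Y. indecomposable C X \<and> indecomposable C Y \<and> elength C E X \<ge> elength C E Y \<and>
            (\<forall>X'. indecomposable C X' \<and> epsub C E X' X
                 \<longrightarrow> gr_le (mu C E X') (mu C E Y) \<and> mu C E X' \<noteq> mu C E Y)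
            \<longrightarrow> gr_le (mu C E X) (mu C E Y))"
proof (intro conjI allI impI)
  note EC = assms(1) and FE = assms(2)
  fix X Y assume h: "indecomposable C X \<and> indecomposable C Y \<and> esub C E X Y"
  then have X: "indecomposable C X" and Y: "indecomposable C Y" and sub: "esub C E X Y" by auto
  note mX = mu_spec[OF EC FE X] and mY = mu_spec[OF EC FE Y]
  obtain i where i: "i \<in> hom C X Y" "adm_mono C E i" using sub unfolding esub_def by blast
  show "gr_le (mu C E X) (mu C E Y)"
  proof (cases "is_iso C i")
    case False
    then have ep: "epsub C E X Y" using i unfolding epsub_def by blast
    have "mu C E X @ [the_enat (elength C E Y)] \<in> mu_seqs C E Y"
      using ms_extend[OF _ ep Y] mX by blast
    then have 1: "gr_le (mu C E X @ [the_enat (elength C E Y)]) (mu C E Y)" using mY by blast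
    have "strict_prefix (mu C E X) (mu C E X @ [the_enat (elength C E Y)])"
      by (simp add: strict_prefix_take)
    then have "gr_le (mu C E X) (mu C E X @ [the_enat (elength C E Y)])" unfolding gr_le_def by blast
    then show ?thesis using 1 gr_le_trans by blast
  next
    case True
    have eq: "elength C E X = elength C E Y" using iso_elength[OF EC i(1,2) True] .
    let ?s = "mu C E X"
    have p: "?s \<noteq> []" "last ?s = the_enat (elength C E X)" using ms_props[OF EC FE] mX by blast+
    have s_eq: "?s = butlast ?s @ [the_enat (elength C E Y)]" using p eq by (metis append_butlast_last_id)
    have "butlast ?s @ [the_enat (elength C E Y)] \<in> mu_seqs C E Y"
    proof (cases "length ?s \<ge> 2")
      case True
      obtain X' where X': "indecomposable C X'" "epsub C E X' X" "butlast ?s \<in> mu_seqs C E X'"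
        using ms_butlast[OF mX[THEN conjunct1] True] by blast
      have "epsub C E X' Y" using epsub_iso_comp[OF EC X'(2) i(1,2) \<open>is_iso C i\<close>] .
      then show ?thesis using ms_extend[OF X'(3) _ Y] by blast
    next
      case False
      have "length (butlast ?s) = 0" using False by simp
      then have "butlast ?s = []" using length_0_conv by blast
      then show ?thesis using ms_single[OF Y] by simp
    qed
    then have "?s \<in> mu_seqs C E Y" using s_eq by simp
    then show ?thesis using mY by blast
  qed
next
  note EC = assms(1) and FE = assms(2)
  fix X Y assume h: "indecomposable C X \<and> indecomposable C Y \<and> mu C E X = mu C E Y"
  then have X: "indecomposable C X" and Y: "indecomposable C Y" and m: "mu C E X = mu C E Y" by auto
  have "the_enat (elength C E X) = the_enat (elength C E Y)"
    using ms_props[OF EC FE] mu_spec[OF EC FE X] mu_spec[OF EC FE Y] m by metis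
  moreover have "elength C E X \<noteq> \<infinity>" "elength C E Y \<noteq> \<infinity>"
    using fin_len[OF FE ind_obj[OF X]] fin_len[OF FE ind_obj[OF Y]] by auto
  ultimately show "elength C E X = elength C E Y"
    by (cases "elength C E X"; cases "elength C E Y") auto
next
  note EC = assms(1) and FE = assms(2)
  fix X Y assume h: "indecomposable C X \<and> indecomposable C Y \<and> elength C E X \<ge> elength C E Y \<and>
            (\<forall>X'. indecomposable C X' \<and> epsub C E X' X
                 \<longrightarrow> gr_le (mu C E X') (mu C E Y) \<and> mu C E X' \<noteq> mu C E Y)"
  then have X: "indecomposable C X" and Y: "indecomposable C Y" and le: "elength C E X \<ge> elength C E Y"
    and H: "\<And>X'. indecomposable C X' \<Longrightarrow> epsub C E X' X \<Longrightarrow> gr_le (mu C E X') (mu C E Y) \<and> mu C E X' \<noteq> mu C E Y"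
    by auto
  note mX = mu_spec[OF EC FE X] and mY = mu_spec[OF EC FE Y]
  let ?s = "mu C E X" and ?y = "mu C E Y"
  have px: "?s \<noteq> []" "last ?s = the_enat (elength C E X)" using ms_props[OF EC FE] mX by blast+
  have py: "?y \<noteq> []" "last ?y = the_enat (elength C E Y)"
    "\<forall>i j. i < j \<longrightarrow> j < length ?y \<longrightarrow> ?y!i < ?y!j" using ms_props[OF EC FE] mY by blast+
  have s_eq: "?s = butlast ?s @ [the_enat (elength C E X)]" using px by (metis append_butlast_last_id)
  have lastle: "last ?y \<le> the_enat (elength C E X)"
    using py(2) the_enat_le[OF le fin_len[OF FE ind_obj[OF Y]] fin_len[OF FE ind_obj[OF X]]] by simp
  have pb: "gr_le (butlast ?s) ?y \<and> butlast ?s \<noteq> ?y"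
  proof (cases "length ?s \<ge> 2")
    case True
    obtain X' where X': "indecomposable C X'" "epsub C E X' X" "butlast ?s \<in> mu_seqs C E X'"
      using ms_butlast[OF mX[THEN conjunct1] True] by blast
    have a: "gr_le (butlast ?s) (mu C E X')" using mu_spec[OF EC FE X'(1)] X'(3) by blast
    have b: "gr_le (mu C E X') ?y" "mu C E X' \<noteq> ?y" using H[OF X'(1,2)] by auto
    have "gr_le (butlast ?s) ?y" using gr_le_trans[OF a b(1)] .
    moreover have "butlast ?s \<noteq> ?y"
    proof
      assume "butlast ?s = ?y"
      then have "gr_le ?y (mu C E X')" using a by simp
      then show False using gr_le_antisym[OF b(1)] b(2) by blast
    qed
    ultimately show ?thesis ..
  next
    case False
    have "length (butlast ?s) = 0" using False by simp
    then have e: "butlast ?s = []" using length_0_conv by blast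
    have "strict_prefix [] ?y" using py(1) by (simp add: strict_prefix_take)
    then show ?thesis using e py(1) unfolding gr_le_def by auto
  qed
  have "gr_le (butlast ?s @ [the_enat (elength C E X)]) ?y"
    using comb[OF pb[THEN conjunct1] pb[THEN conjunct2] py(1) py(3) lastle] .
  then show "gr_le ?s ?y" using s_eq by simp
qed


end
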